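(* Let $l,m,k$ be non-negative integers with $2l\le m\le 2k$, and let $d$ be an integer with $0\le d\le k+l-m$. Then $$\sum_{i=0}^{k+l-m-d}P\big((0,0),(i,i+d)\big)\,P\big((i+l,i+d+m-l),(k,k)\big)=\binom{2k-m+1}{k-m+l-d}-\binom{2k-m+1}{k-m+l-d-1}.$$
   Context: A NE upper path is a lattice path in $\mathbb{Z}^2$ each of whose steps is either $(0,1)$ (North) or $(1,0)$ (East), and which never visits a point $(x,y)$ with $y<x$. For points $(x_1,y_1),(x_2,y_2)\in\mathbb{Z}^2$, $P((x_1,y_1),(x_2,y_2))$ denotes the number of NE upper paths from $(x_1,y_1)$ to $(x_2,y_2)$ (this is $0$ if no such path exists). Convention: $\binom{x}{y}=0$ for integers $x\ge 0$ and $y<0$. *)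

theory Defs
  imports Main
begin

text \<open>A step is encoded as a boolean: True = North (0,1), False = East (1,0).
  The list of lattice points visited by the path starting at p with the given steps
  (including the start point).\<close>
fun path_points :: "int \<times> int \<Rightarrow> bool list \<Rightarrow> (int \<times> int) list" where
  "path_points p [] = [p]"
| "path_points (x, y) (b # bs) =
     (x, y) # path_points (if b then (x, y + 1) else (x + 1, y)) bs"

definition ne_upper_paths :: "int \<times> int \<Rightarrow> int \<times> int \<Rightarrow> bool list set" where
  "ne_upper_paths a b =
     {s. length s = nat ((fst b - fst a) + (snd b - snd a))
         \<and> last (path_points a s) = b
         \<and> (\<forall>q\<in>set (path_points a s). fst q \<le> snd q)}"

definition P :: "int \<times> int \<Rightarrow> int \<times> int \<Rightarrow> nat" where
  "P a b = card (ne_upper_paths a b)"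

text \<open>Binomial coefficient on integer arguments with the convention binom x y = 0 for y < 0
  (used only with x \<ge> 0).\<close>
definition binom :: "int \<Rightarrow> int \<Rightarrow> int" where
  "binom x y = (if y < 0 then 0 else int (nat x choose nat y))"

end

theory Submission
  imports Defs
begin

lemma last_pp: "last (path_points (x,y) s) = (x + int (length (filter Not s)), y + int (length (filter id s)))"
proof (induction s arbitrary: x y)
  case Nil then show ?case by simp
next
  case (Cons b s) then show ?case
    by (cases s) (auto split: if_splits)
qed

lemma hd_pp: "(x,y) \<in> set (path_points (x,y) s)"
  by (cases s) auto

lemma pp_ne[simp]: "path_points p s \<noteq> []"
  by (cases p; cases s) auto

lemma len_filter: "length (filter Not s) + length (filter id s) = length s"
  by (induction s) auto

lemma mem_props:
  assumes "s \<in> ne_upper_paths (x,y) (x2,y2)"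
  shows "x \<le> x2 \<and> y \<le> y2 \<and> x \<le> y"
  using assms hd_pp[of x y s] last_pp[of x y s] unfolding ne_upper_paths_def by auto

lemma fin: "finite (ne_upper_paths a b)"
proof -
  have "ne_upper_paths a b \<subseteq> {xs. set xs \<subseteq> (UNIV::bool set) \<and> length xs = nat ((fst b - fst a) + (snd b - snd a))}"
    unfolding ne_upper_paths_def by auto
  moreover have "finite {xs. set xs \<subseteq> (UNIV::bool set) \<and> length xs = nat ((fst b - fst a) + (snd b - snd a))}"
    by (rule finite_lists_length_eq) simp
  ultimately show ?thesis by (rule finite_subset)
qed

lemma P_empty: "\<not> (x \<le> x2 \<and> y \<le> y2 \<and> x \<le> y) \<Longrightarrow> P (x,y) (x2,y2) = 0"
  unfolding P_def using mem_props[of _ x y x2 y2] by (metis card.empty equals0I)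

lemma base_set: "x \<le> y \<Longrightarrow> ne_upper_paths (x,y) (x,y) = {[]}"
  unfolding ne_upper_paths_def by auto

lemma decomp:
  assumes "(x2-x)+(y2-y) \<ge> 1"
  shows "ne_upper_paths (x,y) (x2,y2) = (if x \<le> y then Cons True ` ne_upper_paths (x,y+1) (x2,y2) \<union> Cons False ` ne_upper_paths (x+1,y) (x2,y2) else {})"
proof (cases "x \<le> y")
  case True
  show ?thesis
  proof (rule set_eqI)
    fix s
    show "s \<in> ne_upper_paths (x,y) (x2,y2) \<longleftrightarrow> s \<in> (if x \<le> y then Cons True ` ne_upper_paths (x,y+1) (x2,y2) \<union> Cons False ` ne_upper_paths (x+1,y) (x2,y2) else {})"
    proof (cases s)
      case Nil then show ?thesis using assms unfolding ne_upper_paths_def by auto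
    next
      case (Cons b t)
      then show ?thesis using assms True unfolding ne_upper_paths_def by (cases b) auto
    qed
  qed
next
  case False
  then show ?thesis using hd_pp[of x y] unfolding ne_upper_paths_def by fastforce
qed

lemma P_rec:
  assumes "(x2-x)+(y2-y) \<ge> 1" "x \<le> y"
  shows "P (x,y) (x2,y2) = P (x,y+1) (x2,y2) + P (x+1,y) (x2,y2)"
proof -
  have "P (x,y) (x2,y2) = card (Cons True ` ne_upper_paths (x,y+1) (x2,y2) \<union> Cons False ` ne_upper_paths (x+1,y) (x2,y2))"
    unfolding P_def using decomp[OF assms(1)] assms(2) by simp
  also have "\<dots> = card (Cons True ` ne_upper_paths (x,y+1) (x2,y2)) + card (Cons False ` ne_upper_paths (x+1,y) (x2,y2))"
    by (rule card_Un_disjoint) (auto simp: fin)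
  also have "\<dots> = P (x,y+1) (x2,y2) + P (x+1,y) (x2,y2)"
    unfolding P_def by (simp add: card_image)
  finally show ?thesis .
qed

lemma binom_neg: "k < 0 \<Longrightarrow> binom n k = 0"
  unfolding binom_def by simp

lemma binom_gt: "0 \<le> n \<Longrightarrow> n < k \<Longrightarrow> binom n k = 0"
  unfolding binom_def by simp

lemma binom_pascal:
  assumes "0 \<le> n"
  shows "binom (n+1) k = binom n k + binom n (k-1)"
proof -
  consider "k < 0" | "k = 0" | "k > 0" by linarith
  then show ?thesis
  proof cases
    case 1 then show ?thesis by (simp add: binom_def)
  next
    case 2 then show ?thesis using assms by (simp add: binom_def nat_add_distrib)
  next
    case 3
    have a: "nat (n+1) = Suc (nat n)" using assms by simp
    have b: "nat k = Suc (nat (k-1))" using 3 by simp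
    show ?thesis using 3 unfolding binom_def a b by simp
  qed
qed

lemma binom_sym: "0 \<le> n \<Longrightarrow> binom n k = binom n (n - k)"
proof -
  assume n: "0 \<le> n"
  consider "k < 0" | "k > n" | "0 \<le> k \<and> k \<le> n" by linarith
  then show ?thesis
  proof cases
    case 3
    have "nat (n-k) = nat n - nat k" using 3 by (simp add: nat_diff_distrib)
    then show ?thesis using 3 n unfolding binom_def
      by (simp add: binomial_symmetric[of "nat k" "nat n"] nat_mono)
  qed (use n in \<open>auto simp: binom_def\<close>)
qed

lemma cf_aux:
  "nat ((x2-x)+(y2-y)) = N \<Longrightarrow> x \<le> y \<Longrightarrow> x \<le> x2 \<Longrightarrow> y \<le> y2 \<Longrightarrow> x2 \<le> y2 \<Longrightarrow>
   int (P (x,y) (x2,y2)) = binom ((x2-x)+(y2-y)) (x2-x) - binom ((x2-x)+(y2-y)) ((x2-x) - (y-x) - 1)"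
proof (induction N arbitrary: x y)
  case 0
  then have "x = x2" "y = y2" by auto
  then show ?case using 0 by (simp add: P_def base_set binom_def binom_neg)
next
  case (Suc N)
  define p where "p = x2 - x"
  define q where "q = y2 - y"
  define u where "u = y - x"
  define M where "M = p + q - 1"
  have M0: "0 \<le> M" and pq: "p + q = M + 1" using Suc.prems unfolding M_def p_def q_def by auto
  have rec: "int (P (x,y) (x2,y2)) = int (P (x,y+1) (x2,y2)) + int (P (x+1,y) (x2,y2))"
    using P_rec[of x2 x y2 y] Suc.prems by simp
  define A where "A = binom M p - binom M (p - (u+1) - 1)"
  define E where "E = binom M (p-1) - binom M ((p-1) - (u-1) - 1)"
  have hA: "int (P (x,y+1) (x2,y2)) = (if q \<ge> 1 then A else 0)"
  proof (cases "q \<ge> 1")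
    case True
    have "int (P (x,y+1) (x2,y2)) = binom ((x2-x)+(y2-(y+1))) (x2-x) - binom ((x2-x)+(y2-(y+1))) ((x2-x) - (y+1-x) - 1)"
      using Suc.IH[of x "y+1"] Suc.prems True unfolding q_def by auto
    then show ?thesis using True unfolding A_def M_def p_def q_def u_def by (simp add: algebra_simps)
  next
    case False
    then show ?thesis using P_empty[of x x2 "y+1" y2] unfolding q_def by auto
  qed
  have hE: "int (P (x+1,y) (x2,y2)) = (if u \<ge> 1 \<and> p \<ge> 1 then E else 0)"
  proof (cases "u \<ge> 1 \<and> p \<ge> 1")
    case True
    have "int (P (x+1,y) (x2,y2)) = binom ((x2-(x+1))+(y2-y)) (x2-(x+1)) - binom ((x2-(x+1))+(y2-y)) ((x2-(x+1)) - (y-(x+1)) - 1)"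
      using Suc.IH[of "x+1" y] Suc.prems True unfolding u_def p_def by auto
    then show ?thesis using True unfolding E_def M_def p_def q_def u_def by (simp add: algebra_simps)
  next
    case False
    then show ?thesis using P_empty[of "x+1" x2 y y2] unfolding u_def p_def by auto
  qed
  have goal: "binom (M+1) p - binom (M+1) (p - u - 1) = (if q \<ge> 1 then A else 0) + (if u \<ge> 1 \<and> p \<ge> 1 then E else 0)"
  proof -
    have P1: "binom (M+1) p = binom M p + binom M (p-1)" using binom_pascal[OF M0] .
    have P2: "binom (M+1) (p-u-1) = binom M (p-u-1) + binom M (p-u-1-1)" using binom_pascal[OF M0] .
    have u0: "0 \<le> u" "0 \<le> p" "0 \<le> q" "u - p + q \<ge> 0" using Suc.prems unfolding u_def p_def q_def by auto
    show ?thesis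
    proof (cases "q \<ge> 1")
      case True
      show ?thesis
      proof (cases "u \<ge> 1 \<and> p \<ge> 1")
        case True
        then show ?thesis using \<open>q \<ge> 1\<close> P1 P2 unfolding A_def E_def by (simp add: algebra_simps)
      next
        case False
        then consider "u = 0" | "p = 0" using u0 by linarith
        then show ?thesis
        proof cases
          case 1 then show ?thesis using \<open>q \<ge> 1\<close> P1 P2 unfolding A_def by (simp add: algebra_simps)
        next
          case 2 then show ?thesis using \<open>q \<ge> 1\<close> False P1 P2 u0 unfolding A_def
            by (simp add: binom_neg algebra_simps)
        qed
      qed
    next
      case False
      then have q0: "q = 0" using u0 by simp
      then have "u \<ge> 1 \<and> p \<ge> 1" using u0 pq M0 by linarith
      moreover have "binom M p = 0" using q0 pq M0 by (intro binom_gt) auto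
      moreover have "binom M (p-u-1-1) = 0" using q0 u0 by (intro binom_neg) auto
      ultimately show ?thesis using q0 P1 P2 unfolding E_def by (simp add: algebra_simps)
    qed
  qed
  show ?case using rec hA hE goal pq unfolding p_def q_def u_def by simp
qed

lemma cf:
  "x \<le> y \<Longrightarrow> x \<le> x2 \<Longrightarrow> y \<le> y2 \<Longrightarrow> x2 \<le> y2 \<Longrightarrow>
   int (P (x,y) (x2,y2)) = binom ((x2-x)+(y2-y)) (x2-x) - binom ((x2-x)+(y2-y)) ((x2-x) - (y-x) - 1)"
  using cf_aux by blast

definition Bn :: "nat \<Rightarrow> nat \<Rightarrow> int" where
  "Bn N e = binom (int (2*N+e)) (int N) - binom (int (2*N+e)) (int N - 1)"

lemma Bn0: "Bn 0 e = 1"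
  unfolding Bn_def by (simp add: binom_def)

lemma Bn_rec: "Bn (Suc M) (Suc e) = Bn (Suc M) e + Bn M (e+2)"
proof -
  have h: "int (2 * Suc M + Suc e) = int (2 * Suc M + e) + 1" by simp
  have h2: "int (2 * M + (e+2)) = int (2 * Suc M + e)" by simp
  show ?thesis unfolding Bn_def h h2
    using binom_pascal[of "int (2 * Suc M + e)" "int (Suc M)"] binom_pascal[of "int (2 * Suc M + e)" "int (Suc M) - 1"]
    by simp
qed

lemma Bn_rec0: "Bn (Suc M) 0 = Bn M 1"
proof -
  have h: "int (2 * Suc M + 0) = int (2 * M + 1) + 1" by simp
  have s: "binom (int (2 * M + 1)) (int (Suc M)) = binom (int (2 * M + 1)) (int M)"
    using binom_sym[of "int (2 * M + 1)" "int (Suc M)"] by simp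
  show ?thesis unfolding Bn_def h
    using binom_pascal[of "int (2 * M + 1)" "int (Suc M)"] binom_pascal[of "int (2 * M + 1)" "int (Suc M) - 1"] s
    by simp
qed

lemma Bn_rec_g: "Bn N (Suc e) = Bn N e + (if N = 0 then 0 else Bn (N-1) (e+2))"
  by (cases N) (simp_all add: Bn0 Bn_rec)

lemma conv: "(\<Sum>i\<le>n. Bn i d * Bn (n-i) e) = Bn n (d+e+1)"
proof (induction n arbitrary: d e)
  case 0 then show ?case by (simp add: Bn0)
next
  case (Suc m)
  note outer = Suc.IH
  show ?case
  proof (induction e)
    case 0
    have "(\<Sum>i\<le>Suc m. Bn i d * Bn (Suc m - i) 0) = (\<Sum>i\<le>m. Bn i d * Bn (Suc m - i) 0) + Bn (Suc m) d"
      by (simp add: Bn0)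
    also have "(\<Sum>i\<le>m. Bn i d * Bn (Suc m - i) 0) = (\<Sum>i\<le>m. Bn i d * Bn (m - i) 1)"
      by (rule sum.cong) (auto simp: Suc_diff_le Bn_rec0)
    also have "\<dots> = Bn m (d+2)" using outer[of d 1] by simp
    finally show ?case
      using Bn_rec[of m d] by simp
  next
    case (Suc e)
    have "(\<Sum>i\<le>Suc m. Bn i d * Bn (Suc m - i) (Suc e))
        = (\<Sum>i\<le>Suc m. Bn i d * Bn (Suc m - i) e) + (\<Sum>i\<le>Suc m. Bn i d * (if Suc m - i = 0 then 0 else Bn (Suc m - i - 1) (e+2)))"
      by (simp add: Bn_rec_g[of _ e] distrib_left sum.distrib del: Bn_rec)
    also have "(\<Sum>i\<le>Suc m. Bn i d * (if Suc m - i = 0 then 0 else Bn (Suc m - i - 1) (e+2)))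
        = (\<Sum>i\<le>m. Bn i d * Bn (m - i) (e+2))"
      unfolding sum.atMost_Suc by (auto intro!: sum.cong simp: Suc_diff_le simp del: Bn_rec)
    also have "\<dots> = Bn m (d + (e+2) + 1)" using outer[of d "e+2"] by simp
    finally show ?case using Suc.IH Bn_rec[of m "d+e+1"] by simp
  qed
qed

lemma sum_reindex_int: "0 \<le> n \<Longrightarrow> (\<Sum>i = 0..n. f i) = (\<Sum>j\<le>nat n. f (int j))"
proof -
  assume n: "0 \<le> n"
  have "{0..n} = int ` {..nat n}"
  proof (rule set_eqI)
    fix i show "i \<in> {0..n} \<longleftrightarrow> i \<in> int ` {..nat n}"
      using n by (auto simp: image_iff intro!: bexI[of _ "nat i"])
  qed
  then show ?thesis by (simp add: sum.reindex)
qed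

theorem mainTheorem5:
  fixes l m k d :: int
  assumes "0 \<le> l" "0 \<le> m" "0 \<le> k"
    and "2 * l \<le> m" "m \<le> 2 * k"
    and "0 \<le> d" "d \<le> k + l - m"
  shows "(\<Sum>i = 0..k + l - m - d.
            int (P (0, 0) (i, i + d)) * int (P (i + l, i + d + m - l) (k, k)))
         = binom (2 * k - m + 1) (k - m + l - d) - binom (2 * k - m + 1) (k - m + l - d - 1)"
proof -
  define n where "n = k + l - m - d"
  define e where "e = d + m - 2 * l"
  define N where "N = nat n"
  define D where "D = nat d"
  define E where "E = nat e"
  have n0: "0 \<le> n" and e0: "0 \<le> e" using assms unfolding n_def e_def by auto
  have nN: "n = int N" and dD: "d = int D" and eE: "e = int E" using n0 e0 assms unfolding N_def D_def E_def by auto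
  have f1: "int (P (0, 0) (int j, int j + d)) = Bn j D" for j
    using cf[of 0 0 "int j" "int j + d"] assms unfolding Bn_def dD by (simp add: algebra_simps)
  have f2: "int (P (int j + l, int j + d + m - l) (k, k)) = Bn (N - j) E" if j: "j \<le> N" for j
  proof -
    have c: "int (P (int j + l, int j + d + m - l) (k, k)) =
      binom ((k - (int j + l)) + (k - (int j + d + m - l))) (k - (int j + l))
      - binom ((k - (int j + l)) + (k - (int j + d + m - l))) ((k - (int j + l)) - ((int j + d + m - l) - (int j + l)) - 1)"
      using cf[of "int j + l" "int j + d + m - l" k k] assms j nN unfolding n_def by auto
    define T where "T = int (2 * (N - j) + E)"
    have T1: "(k - (int j + l)) + (k - (int j + d + m - l)) = T"
      using j nN eE unfolding T_def n_def e_def by (simp add: of_nat_diff)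
    have a1: "k - (int j + l) = T - int (N - j)"
      using j nN eE unfolding T_def n_def e_def by (simp add: of_nat_diff)
    have a2: "(k - (int j + l)) - ((int j + d + m - l) - (int j + l)) - 1 = int (N - j) - 1"
      using j nN eE unfolding T_def n_def e_def by (simp add: of_nat_diff)
    have T0: "0 \<le> T" unfolding T_def by simp
    note c2 = c[unfolded T1 a2, unfolded a1]
    show ?thesis unfolding c2 Bn_def T_def[symmetric]
      using binom_sym[OF T0, of "int (N - j)"] by simp
  qed
  have "(\<Sum>i = 0..k + l - m - d. int (P (0, 0) (i, i + d)) * int (P (i + l, i + d + m - l) (k, k)))
      = (\<Sum>j\<le>N. int (P (0, 0) (int j, int j + d)) * int (P (int j + l, int j + d + m - l) (k, k)))"
    using sum_reindex_int[OF n0, of "\<lambda>i. int (P (0, 0) (i, i + d)) * int (P (i + l, i + d + m - l) (k, k))"]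
    unfolding n_def N_def by simp
  also have "\<dots> = (\<Sum>j\<le>N. Bn j D * Bn (N - j) E)"
    by (rule sum.cong) (auto simp: f1 f2)
  also have "\<dots> = Bn N (D + E + 1)" by (rule conv)
  also have "\<dots> = binom (2 * k - m + 1) (k - m + l - d) - binom (2 * k - m + 1) (k - m + l - d - 1)"
  proof -
    have h1: "int (2 * N + (D + E + 1)) = 2 * k - m + 1" using nN dD eE unfolding n_def e_def by simp
    have h2: "int N = k - m + l - d" using nN unfolding n_def by simp
    show ?thesis unfolding Bn_def h1 h2 ..
  qed
  finally show ?thesis .
qed

end
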